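(* Let $\Pi_1$ and $\Pi_2$ be two epistemic logic programs. The following statements are equivalent: (1) $\Pi_1$ and $\Pi_2$ are strongly ELP-CWV-equivalent; (2) $\Pi_1$ and $\Pi_2$ are strongly ASP-CWV-equivalent; (3) $\Pi_1$ and $\Pi_2$ are strongly ELP-WV-equivalent; (4) $\Pi_1$ and $\Pi_2$ are strongly ASP-WV-equivalent; (5) $\mathcal{SE}_{\Pi_1} = \mathcal{SE}_{\Pi_2}$.
   Context: A literal over a set of atoms $\mathcal{A}$ is an atom $a$ or $\neg a$. An interpretation is $I\subseteq\mathcal{A}$; $I\models a$ iff $a\in I$, $I\models\neg\ell$ iff $I\not\models\ell$. A (plain) logic program $(\mathcal{A},\mathcal{R})$ has rules $a_1\vee\cdots\vee a_l \leftarrow a_{l+1},\ldots,a_m,\neg\ell_1,\ldots,\neg\ell_n$ ($\ell_i$ literals); $H(r)$ head, $B(r)$ body, $B^+(r)=\{a_{l+1},\ldots,a_m\}$; $M\models r$ iff $M\models B(r)$ implies $M\cap H(r)\neq\emptyset$; $\mathrm{Mods}(\Pi)$ is the set of models. GL-reduct: $\Pi^I=(\mathcal{A},\{H(r)\leftarrow B^+(r)\mid r\in\mathcal{R},\ I\models\neg\ell\ \forall\neg\ell\in B(r)\})$. Answer set: model $M$ of $\Pi$ such that no $M'\subset M$ is a model of $\Pi^M$; $AS(\Pi)$ the set of answer sets ($\neg\neg\neg a$ treated as $\neg a$). An SE-model of $\Pi$ is $(X,Y)$ with $X\subseteq Y\subseteq\mathcal{A}$, $Y\models\Pi$, $X\models\Pi^Y$;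 $\mathrm{SE}(\Pi)$ the set of SE-models. An ELP is $(\mathcal{A},\mathcal{E},\mathcal{R})$ with $\mathcal{E}$ a set of epistemic literals $\mathbf{not}\,\ell$ and rules $a_1\vee\cdots\vee a_k\leftarrow \ell_1,\ldots,\ell_m,\xi_1,\ldots,\xi_j,\neg\xi_{j+1},\ldots,\neg\xi_n$, $\xi_i\in\mathcal{E}$. The union of ELPs is componentwise: $(\mathcal{A}_1,\mathcal{E}_1,\mathcal{R}_1)\cup(\mathcal{A}_2,\mathcal{E}_2,\mathcal{R}_2)=(\mathcal{A}_1\cup\mathcal{A}_2,\mathcal{E}_1\cup\mathcal{E}_2,\mathcal{R}_1\cup\mathcal{R}_2)$; a plain logic program is regarded as an ELP with no epistemic literals. A guess is $\Phi\subseteq\mathcal{E}$; $\mathcal{I}$ is $\Phi$-compatible w.r.t. $\mathcal{E}$ iff $\mathcal{I}\neq\emptyset$, every $\mathbf{not}\,\ell\in\Phi$ has some $I\in\mathcal{I}$ with $I\not\models\ell$, and every $\mathbf{not}\,\ell\in\mathcal{E}\setminus\Phi$ has $I\models\ell$ for all $I\in\mathcal{I}$. The epistemic reduct $\Pi^\Phi=(\mathcal{A},\mathcal{R}^\Phi)$ replaces each $\mathbf{not}\,\ell\in\Phi$ by $\top$ and every other $\mathbf{not}$ by $\neg$. A candidate world view (CWV) of $\Pi$ is a set $\mathcal{M}=AS(\Pi^\Phi)$ that is $\Phi$-compatible w.r.t. $\mathcal{E}$, for some guess $\Phi$ (its associated guess). A world view (WV) is a CWV whose associated guess is subset-maximal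 among associated guesses of CWVs. Two ELPs are CWV-equivalent (WV-equivalent) iff their sets of CWVs (WVs) coincide. $\Pi_1,\Pi_2$ are strongly ELP-WV-equivalent (resp. ELP-CWV-equivalent) iff for every ELP $\Pi$, $\Pi_1\cup\Pi$ and $\Pi_2\cup\Pi$ are WV-equivalent (resp. CWV-equivalent); strongly ASP-WV-equivalent (resp. ASP-CWV-equivalent) iff the same holds for every plain logic program $\Pi$. $\Phi$ is realizable in $\Pi$ iff some subset of $\mathrm{Mods}(\Pi^\Phi)$ is $\Phi$-compatible w.r.t. $\mathcal{E}$. The SE-function of an ELP $\Pi=(\mathcal{A},\mathcal{E},\mathcal{R})$: $\mathcal{SE}_\Pi(\Phi)=\mathrm{SE}(\Pi^\Phi)$ if $\Phi$ is realizable in $\Pi$, and $\emptyset$ otherwise (programs may be assumed over common $\mathcal{A},\mathcal{E}$ when comparing SE-functions). *)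

theory Defs
  imports Main
begin

text \<open>Formulas occurring in rule bodies: atoms, the constant top (produced by the
epistemic reduct) and (nested) default negation.\<close>
datatype 'a fml = Atm 'a | Top | Neg "'a fml"

primrec sat :: "'a set \<Rightarrow> 'a fml \<Rightarrow> bool" where
  "sat I (Atm a) = (a \<in> I)"
| "sat I Top = True"
| "sat I (Neg f) = (\<not> sat I f)"

primrec fatoms :: "'a fml \<Rightarrow> 'a set" where
  "fatoms (Atm a) = {a}"
| "fatoms Top = {}"
| "fatoms (Neg f) = fatoms f"

definition is_literal :: "'a fml \<Rightarrow> bool" where
  "is_literal l \<longleftrightarrow> (\<exists>a. l = Atm a \<or> l = Neg (Atm a))"

definition plain_belem :: "'a fml \<Rightarrow> bool" where
  "plain_belem f \<longleftrightarrow> (\<exists>a. f = Atm a) \<or> (\<exists>l. is_literal l \<and> f = Neg l)"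

text \<open>A plain rule: (head, body); a plain program: (atoms, rules).\<close>
type_synonym 'a prule = "'a set \<times> 'a fml set"
type_synonym 'a lp = "'a set \<times> 'a prule set"

text \<open>Body elements of ELP rules: objective elements, epistemic literals
  \<open>Ep l\<close> standing for \<open>not l\<close>, and negated epistemic literals \<open>NEp l\<close> standing
  for \<open>\<not> not l\<close>.\<close>
datatype 'a ebody = Obj "'a fml" | Ep "'a fml" | NEp "'a fml"

type_synonym 'a erule = "'a set \<times> 'a ebody set"
text \<open>An ELP \<open>(A, E, R)\<close>; the set \<open>E\<close> of epistemic literals \<open>not l\<close> is represented
  by the set of the literals \<open>l\<close>.\<close>
type_synonym 'a elp = "'a set \<times> 'a fml set \<times> 'a erule set"

definition elp_atoms :: "'a elp \<Rightarrow> 'a set" where "elp_atoms P = fst P"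
definition elp_eps :: "'a elp \<Rightarrow> 'a fml set" where "elp_eps P = fst (snd P)"
definition elp_rules :: "'a elp \<Rightarrow> 'a erule set" where "elp_rules P = snd (snd P)"

definition wf_ebody :: "'a set \<Rightarrow> 'a fml set \<Rightarrow> 'a ebody \<Rightarrow> bool" where
  "wf_ebody A E b \<longleftrightarrow>
     (case b of Obj f \<Rightarrow> plain_belem f \<and> fatoms f \<subseteq> A
              | Ep l \<Rightarrow> l \<in> E
              | NEp l \<Rightarrow> l \<in> E)"

definition wf_elp :: "'a elp \<Rightarrow> bool" where
  "wf_elp P \<longleftrightarrow> (case P of (A, E, R) \<Rightarrow>
      finite A \<and> finite E \<and> finite R
    \<and> (\<forall>l\<in>E. is_literal l \<and> fatoms l \<subseteq> A)
    \<and> (\<forall>(H, B)\<in>R. H \<subseteq> A \<and> (\<forall>b\<in>B. wf_ebody A E b)))"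

definition plain_elp :: "'a elp \<Rightarrow> bool" where
  "plain_elp P \<longleftrightarrow> wf_elp P \<and> elp_eps P = {}"

definition elp_union :: "'a elp \<Rightarrow> 'a elp \<Rightarrow> 'a elp" where
  "elp_union P Q = (elp_atoms P \<union> elp_atoms Q, elp_eps P \<union> elp_eps Q,
                    elp_rules P \<union> elp_rules Q)"

definition sat_rule :: "'a set \<Rightarrow> 'a prule \<Rightarrow> bool" where
  "sat_rule M r \<longleftrightarrow> ((\<forall>f\<in>snd r. sat M f) \<longrightarrow> M \<inter> fst r \<noteq> {})"

definition Mods :: "'a lp \<Rightarrow> 'a set set" where
  "Mods P = {M. M \<subseteq> fst P \<and> (\<forall>r\<in>snd P. sat_rule M r)}"

definition gl_reduct :: "'a lp \<Rightarrow> 'a set \<Rightarrow> 'a lp" where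
  "gl_reduct P I = (fst P,
     {(fst r, Atm ` {a. Atm a \<in> snd r}) | r.
        r \<in> snd P \<and> (\<forall>l. Neg l \<in> snd r \<longrightarrow> sat I (Neg l))})"

definition AS :: "'a lp \<Rightarrow> 'a set set" where
  "AS P = {M. M \<in> Mods P \<and> \<not> (\<exists>M'. M' \<subset> M \<and> M' \<in> Mods (gl_reduct P M))}"

definition SE :: "'a lp \<Rightarrow> ('a set \<times> 'a set) set" where
  "SE P = {(X, Y). X \<subseteq> Y \<and> Y \<subseteq> fst P \<and> Y \<in> Mods P \<and> X \<in> Mods (gl_reduct P Y)}"

definition compatible :: "'a set set \<Rightarrow> 'a fml set \<Rightarrow> 'a fml set \<Rightarrow> bool" where
  "compatible \<I> Phi E \<longleftrightarrow> \<I> \<noteq> {}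
     \<and> (\<forall>l\<in>Phi. \<exists>I\<in>\<I>. \<not> sat I l)
     \<and> (\<forall>l\<in>E - Phi. \<forall>I\<in>\<I>. sat I l)"

text \<open>Epistemic reduct: \<open>not l \<in> Phi\<close> becomes top, every other \<open>not\<close> becomes \<open>\<not>\<close>.\<close>
primrec ered :: "'a fml set \<Rightarrow> 'a ebody \<Rightarrow> 'a fml" where
  "ered Phi (Obj f) = f"
| "ered Phi (Ep l) = (if l \<in> Phi then Top else Neg l)"
| "ered Phi (NEp l) = (if l \<in> Phi then Neg Top else Neg (Neg l))"

definition ep_reduct :: "'a elp \<Rightarrow> 'a fml set \<Rightarrow> 'a lp" where
  "ep_reduct P Phi = (elp_atoms P, {(H, ered Phi ` B) | H B. (H, B) \<in> elp_rules P})"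

definition cwv_with :: "'a elp \<Rightarrow> 'a fml set \<Rightarrow> 'a set set \<Rightarrow> bool" where
  "cwv_with P Phi M \<longleftrightarrow> Phi \<subseteq> elp_eps P \<and> M = AS (ep_reduct P Phi)
      \<and> compatible M Phi (elp_eps P)"

definition CWV :: "'a elp \<Rightarrow> 'a set set set" where
  "CWV P = {M. \<exists>Phi. cwv_with P Phi M}"

definition WV :: "'a elp \<Rightarrow> 'a set set set" where
  "WV P = {M. \<exists>Phi. cwv_with P Phi M
              \<and> \<not> (\<exists>Phi' M'. cwv_with P Phi' M' \<and> Phi \<subset> Phi')}"

definition strongly_elp_wv_eq :: "'a elp \<Rightarrow> 'a elp \<Rightarrow> bool" where
  "strongly_elp_wv_eq P1 P2 \<longleftrightarrow>
     (\<forall>P. wf_elp P \<longrightarrow> WV (elp_union P1 P) = WV (elp_union P2 P))"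

definition strongly_elp_cwv_eq :: "'a elp \<Rightarrow> 'a elp \<Rightarrow> bool" where
  "strongly_elp_cwv_eq P1 P2 \<longleftrightarrow>
     (\<forall>P. wf_elp P \<longrightarrow> CWV (elp_union P1 P) = CWV (elp_union P2 P))"

definition strongly_asp_wv_eq :: "'a elp \<Rightarrow> 'a elp \<Rightarrow> bool" where
  "strongly_asp_wv_eq P1 P2 \<longleftrightarrow>
     (\<forall>P. plain_elp P \<longrightarrow> WV (elp_union P1 P) = WV (elp_union P2 P))"

definition strongly_asp_cwv_eq :: "'a elp \<Rightarrow> 'a elp \<Rightarrow> bool" where
  "strongly_asp_cwv_eq P1 P2 \<longleftrightarrow>
     (\<forall>P. plain_elp P \<longrightarrow> CWV (elp_union P1 P) = CWV (elp_union P2 P))"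

definition realizable :: "'a elp \<Rightarrow> 'a fml set \<Rightarrow> bool" where
  "realizable P Phi \<longleftrightarrow> (\<exists>\<I>. \<I> \<subseteq> Mods (ep_reduct P Phi) \<and> compatible \<I> Phi (elp_eps P))"

text \<open>SE-function; defined on guesses \<open>Phi \<subseteq> E\<close> (value \<open>{}\<close> elsewhere).\<close>
definition SE_fun :: "'a elp \<Rightarrow> 'a fml set \<Rightarrow> ('a set \<times> 'a set) set" where
  "SE_fun P Phi = (if Phi \<subseteq> elp_eps P \<and> realizable P Phi then SE (ep_reduct P Phi) else {})"

end

theory Submission
  imports Defs
begin

definition erules :: "'a fml set \<Rightarrow> 'a erule set \<Rightarrow> 'a prule set" where
  "erules Phi R = {(H, ered Phi ` B) | H B. (H, B) \<in> R}"

definition modr :: "'a prule set \<Rightarrow> 'a set \<Rightarrow> bool" where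
  "modr Q M \<longleftrightarrow> (\<forall>r\<in>Q. sat_rule M r)"

definition glr :: "'a prule set \<Rightarrow> 'a set \<Rightarrow> 'a prule set" where
  "glr Q I = {(fst r, Atm ` {a. Atm a \<in> snd r}) | r.
        r \<in> Q \<and> (\<forall>l. Neg l \<in> snd r \<longrightarrow> sat I (Neg l))}"

definition rules_over :: "'a set \<Rightarrow> 'a prule set \<Rightarrow> bool" where
  "rules_over A Q \<longleftrightarrow> (\<forall>(H,B)\<in>Q. H \<subseteq> A \<and> (\<forall>f\<in>B. fatoms f \<subseteq> A))"

lemma ep_reduct_eq: "ep_reduct P Phi = (elp_atoms P, erules Phi (elp_rules P))"
  by (simp add: ep_reduct_def erules_def)

lemma erules_Un: "erules Phi (R1 \<union> R2) = erules Phi R1 \<union> erules Phi R2"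
  by (auto simp: erules_def)

lemma Mods_eq: "Mods P = {M. M \<subseteq> fst P \<and> modr (snd P) M}"
  by (simp add: Mods_def modr_def)

lemma gl_reduct_eq: "gl_reduct P I = (fst P, glr (snd P) I)"
  by (simp add: gl_reduct_def glr_def)

lemma AS_alt: "M \<in> AS P \<longleftrightarrow> M \<subseteq> fst P \<and> modr (snd P) M \<and>
   \<not>(\<exists>M'. M' \<subset> M \<and> modr (glr (snd P) M) M')"
  unfolding AS_def Mods_eq gl_reduct_eq by auto

lemma SE_alt: "(X,Y) \<in> SE P \<longleftrightarrow> X \<subseteq> Y \<and> Y \<subseteq> fst P \<and> modr (snd P) Y \<and> modr (glr (snd P) Y) X"
  unfolding SE_def Mods_eq gl_reduct_eq by auto

lemma modr_Un[simp]: "modr (Q1 \<union> Q2) M \<longleftrightarrow> modr Q1 M \<and> modr Q2 M"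
  by (auto simp: modr_def)

lemma glr_Un: "glr (Q1 \<union> Q2) M = glr Q1 M \<union> glr Q2 M"
  unfolding glr_def by auto

lemma sat_agree: "fatoms f \<subseteq> A \<Longrightarrow> M \<inter> A = M' \<inter> A \<Longrightarrow> sat M f = sat M' f"
  by (induction f) auto

lemma modr_agree:
  assumes "rules_over A Q" "M \<inter> A = M' \<inter> A" shows "modr Q M = modr Q M'"
proof -
  have "sat_rule M r = sat_rule M' r" if "r \<in> Q" for r
  proof -
    obtain H B where r: "r = (H,B)" by fastforce
    from assms(1) that r have HB: "H \<subseteq> A \<and> (\<forall>f\<in>B. fatoms f \<subseteq> A)"
      unfolding rules_over_def by blast
    then have H: "H \<subseteq> A" and B: "\<forall>f\<in>B. fatoms f \<subseteq> A" by auto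
    have e: "sat M f = sat M' f" if "f \<in> B" for f using B that sat_agree[of f A M M'] assms(2) by blast
    have "(\<forall>f\<in>B. sat M f) = (\<forall>f\<in>B. sat M' f)" using e by blast
    moreover have "M \<inter> H = M' \<inter> H" using H assms(2) by blast
    ultimately show ?thesis by (simp add: sat_rule_def r)
  qed
  then show ?thesis by (simp add: modr_def)
qed

lemma glr_agree:
  assumes "rules_over A Q" "M \<inter> A = M' \<inter> A" shows "glr Q M = glr Q M'"
proof -
  have "(\<forall>l. Neg l \<in> snd r \<longrightarrow> sat M (Neg l)) = (\<forall>l. Neg l \<in> snd r \<longrightarrow> sat M' (Neg l))"
    if "r \<in> Q" for r
  proof -
    obtain H B where r: "r = (H,B)" by fastforce
    from assms(1) that r have B: "\<forall>f\<in>B. fatoms f \<subseteq> A"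
      unfolding rules_over_def by blast
    have e: "sat M f = sat M' f" if "f \<in> B" for f using B that sat_agree[of f A M M'] assms(2) by blast
    have e2: "sat M l = sat M' l" if "Neg l \<in> B" for l using e[OF that] by simp
    show ?thesis unfolding r snd_conv sat.simps using e2 by metis
  qed
  then show ?thesis unfolding glr_def by (intro Collect_cong) (metis (no_types, lifting))
qed

lemma rules_over_glr: "rules_over A Q \<Longrightarrow> rules_over A (glr Q I)"
  unfolding rules_over_def glr_def by fastforce

lemma rules_over_Un: "rules_over A (Q1 \<union> Q2) \<longleftrightarrow> rules_over A Q1 \<and> rules_over A Q2"
  unfolding rules_over_def ball_Un by simp

lemma modr_glr_self: "modr Q M \<Longrightarrow> modr (glr Q M) M"
proof -
  assume m: "modr Q M"
  show ?thesis unfolding modr_def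
  proof
    fix r' assume "r' \<in> glr Q M"
    then obtain r where r: "r \<in> Q" "\<forall>l. Neg l \<in> snd r \<longrightarrow> sat M (Neg l)"
      and r': "r' = (fst r, Atm ` {a. Atm a \<in> snd r})" using \<open>r' \<in> glr Q M\<close> unfolding glr_def by auto
    show "sat_rule M r'"
      unfolding sat_rule_def r'
    proof (intro impI)
      assume "\<forall>f\<in>snd (fst r, Atm ` {a. Atm a \<in> snd r}). sat M f"
      then have atoms: "\<forall>a. Atm a \<in> snd r \<longrightarrow> a \<in> M" by auto
      have "\<forall>f\<in>snd r. sat M f"
      proof
        fix f assume f: "f \<in> snd r"
        show "sat M f"
        proof (cases f)
          case (Atm a) then show ?thesis using atoms f by auto
        next
          case Top then show ?thesis by simp
        next
          case (Neg l) then show ?thesis using r(2) f by blast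
        qed
      qed
      then show "M \<inter> fst (fst r, Atm ` {a. Atm a \<in> snd r}) \<noteq> {}"
        using m r(1) unfolding modr_def sat_rule_def by simp
    qed
  qed
qed

lemma glr_atoms: "(\<forall>r\<in>Q. \<forall>f\<in>snd r. \<exists>a. f = Atm a) \<Longrightarrow> glr Q I = Q"
proof -
  assume h: "\<forall>r\<in>Q. \<forall>f\<in>snd r. \<exists>a. f = Atm a"
  have e: "Atm ` {a. Atm a \<in> snd r} = snd r" if "r \<in> Q" for r
    using h that by fastforce
  have n: "\<forall>l. Neg l \<notin> snd r" if "r \<in> Q" for r using h that by fastforce
  show ?thesis
  proof (rule set_eqI, rule iffI)
    fix x assume "x \<in> glr Q I"
    then obtain r where "x = (fst r, Atm ` {a. Atm a \<in> snd r})" "r \<in> Q"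
      unfolding glr_def by auto
    then show "x \<in> Q" using e by simp
  next
    fix x assume x: "x \<in> Q"
    have "x = (fst x, Atm ` {a. Atm a \<in> snd x})" using e[OF x] by simp
    moreover have "\<forall>l. Neg l \<in> snd x \<longrightarrow> sat I (Neg l)" using n[OF x] by simp
    ultimately show "x \<in> glr Q I" unfolding glr_def using x by blast
  qed
qed

lemma AS_char:
  assumes ro: "rules_over A Q" and AA: "A \<subseteq> A'"
  shows "M \<in> AS (A', Q \<union> S) \<longleftrightarrow> M \<subseteq> A' \<and> modr S M \<and> (M \<inter> A, M \<inter> A) \<in> SE (A, Q)
     \<and> \<not>(\<exists>M'. M' \<subset> M \<and> (M' \<inter> A, M \<inter> A) \<in> SE (A, Q) \<and> modr (glr S M) M')"
proof -
  have ag: "M \<inter> A = (M \<inter> A) \<inter> A" for M :: "'a set" by blast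
  have m1: "modr Q M \<longleftrightarrow> modr Q (M \<inter> A)" using modr_agree[OF ro ag[of M]] .
  have se1: "(M \<inter> A, M \<inter> A) \<in> SE (A, Q) \<longleftrightarrow> modr Q M"
    unfolding SE_alt using m1 modr_glr_self by auto
  have g: "glr Q M = glr Q (M \<inter> A)" using glr_agree[OF ro ag[of M]] .
  have se2: "(M' \<inter> A, M \<inter> A) \<in> SE (A, Q) \<longleftrightarrow> modr (glr Q M) M'"
    if "M' \<subseteq> M" "modr Q M" for M'
  proof -
    have "modr (glr Q M) M' \<longleftrightarrow> modr (glr Q M) (M' \<inter> A)"
      using modr_agree[OF rules_over_glr[OF ro] ag[of M']] .
    then show ?thesis unfolding SE_alt using that m1 g by auto
  qed
  show ?thesis
    unfolding AS_alt fst_conv snd_conv modr_Un glr_Un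
    using se1 se2 by (metis psubset_imp_subset)
qed

lemma erules_image: "erules Psi R = (\<lambda>(H,B). (H, ered Psi ` B)) ` R"
  by (auto simp: erules_def image_iff)

lemma modr_image_cong:
  assumes "\<And>x. x \<in> R \<Longrightarrow> sat_rule M (f x) = sat_rule M (g x)"
  shows "modr (f ` R) M = modr (g ` R) M"
  using assms unfolding modr_def by auto

lemma glr_image_cong:
  assumes "\<And>x. x \<in> R \<Longrightarrow> fst (f x) = fst (g x) \<and> {a. Atm a \<in> snd (f x)} = {a. Atm a \<in> snd (g x)}
      \<and> ((\<forall>l. Neg l \<in> snd (f x) \<longrightarrow> \<not> sat M l) \<longleftrightarrow> (\<forall>l. Neg l \<in> snd (g x) \<longrightarrow> \<not> sat M l))"
  shows "glr (f ` R) M = glr (g ` R) M"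
proof -
  have "glr (h ` R) M = {(fst (h x), Atm ` {a. Atm a \<in> snd (h x)}) | x. x \<in> R \<and>
      (\<forall>l. Neg l \<in> snd (h x) \<longrightarrow> sat M (Neg l))}" for h
    unfolding glr_def by blast
  then show ?thesis
    apply simp
    apply (intro Collect_cong ex_cong1)
    subgoal for y x by (cases "x \<in> R") (simp_all add: assms)
    done
qed

lemma ered_Atm: "ered Psi b = Atm a \<longleftrightarrow> b = Obj (Atm a)"
  by (cases b) auto

lemma ered_slice:
  assumes "Phi \<subseteq> Psi" "\<forall>l\<in>Psi - Phi. \<not> sat M l"
  shows "sat M (ered Psi b) = sat M (ered Phi b) \<and>
     (\<forall>l. ered Psi b = Neg l \<longrightarrow> \<not> sat M l) = (\<forall>l. ered Phi b = Neg l \<longrightarrow> \<not> sat M l)"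
  using assms by (cases b) auto

lemma ered_Atm': "Atm a = ered Psi b \<longleftrightarrow> b = Obj (Atm a)"
  by (cases b) auto

lemma rule_parts1: "{a. Atm a \<in> ered Psi ` B} = {a. Obj (Atm a) \<in> B}"
  by (auto simp: image_iff ered_Atm')

lemma rule_parts2: "(\<forall>l. Neg l \<in> ered Psi ` B \<longrightarrow> \<not> sat M l) \<longleftrightarrow> (\<forall>b\<in>B. \<forall>l. ered Psi b = Neg l \<longrightarrow> \<not> sat M l)"
  by (auto simp: image_iff) force

lemma rule_parts3: "(\<forall>f\<in>ered Psi ` B. sat M f) \<longleftrightarrow> (\<forall>b\<in>B. sat M (ered Psi b))"
  by simp

lemma erules_slice:
  assumes "Phi \<subseteq> Psi" "\<forall>l\<in>Psi - Phi. \<not> sat M l"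
  shows "modr (erules Psi R) M = modr (erules Phi R) M"
    and "glr (erules Psi R) M = glr (erules Phi R) M"
proof -
  note es = ered_slice[OF assms]
  show "modr (erules Psi R) M = modr (erules Phi R) M"
    unfolding erules_image
    apply (rule modr_image_cong)
    subgoal for x proof -
      obtain H B where xeq: "x = (H,B)" by (cases x)
      show ?thesis by (simp only: xeq case_prod_conv fst_conv snd_conv sat_rule_def rule_parts3 es)
    qed
    done
  show "glr (erules Psi R) M = glr (erules Phi R) M"
    unfolding erules_image
    apply (rule glr_image_cong)
    subgoal for x proof -
      obtain H B where xeq: "x = (H,B)" by (cases x)
      show ?thesis unfolding xeq prod.case fst_conv snd_conv rule_parts1 rule_parts2 using es by simp
    qed
    done
qed

lemma erules_cong:
  assumes "\<And>H B b. (H,B) \<in> R \<Longrightarrow> b \<in> B \<Longrightarrow> ered Psi b = ered Phi b"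
  shows "erules Psi R = erules Phi R"
proof -
  have "(\<lambda>(H,B). (H, ered Psi ` B)) x = (\<lambda>(H,B). (H, ered Phi ` B)) x" if "x \<in> R" for x
    using assms that by (cases x) (auto intro!: image_cong)
  then show ?thesis unfolding erules_image by (rule image_cong[OF refl])
qed

lemma wf_elpD:
  assumes "wf_elp P"
  shows "finite (elp_atoms P)" "finite (elp_eps P)" "finite (elp_rules P)"
    "\<forall>l\<in>elp_eps P. is_literal l \<and> fatoms l \<subseteq> elp_atoms P"
    "\<forall>(H,B)\<in>elp_rules P. H \<subseteq> elp_atoms P \<and> (\<forall>b\<in>B. wf_ebody (elp_atoms P) (elp_eps P) b)"
proof -
  obtain A E R where P: "P = (A,E,R)" by (cases P) auto
  show "finite (elp_atoms P)" "finite (elp_eps P)" "finite (elp_rules P)"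
    "\<forall>l\<in>elp_eps P. is_literal l \<and> fatoms l \<subseteq> elp_atoms P"
    "\<forall>(H,B)\<in>elp_rules P. H \<subseteq> elp_atoms P \<and> (\<forall>b\<in>B. wf_ebody (elp_atoms P) (elp_eps P) b)"
    using assms unfolding P wf_elp_def elp_atoms_def elp_eps_def elp_rules_def by auto
qed

lemma ered_fatoms:
  assumes "wf_ebody A E b" "\<forall>l\<in>E. fatoms l \<subseteq> A"
  shows "fatoms (ered Psi b) \<subseteq> A"
  using assms by (cases b) (auto simp: wf_ebody_def)

lemma rules_over_erules:
  assumes "wf_elp P" shows "rules_over (elp_atoms P) (erules Psi (elp_rules P))"
proof -
  note w = wf_elpD[OF assms]
  show ?thesis unfolding rules_over_def erules_def
  proof (clarify)
    fix H B assume HB: "(H,B) \<in> elp_rules P"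
    then have "H \<subseteq> elp_atoms P \<and> (\<forall>b\<in>B. wf_ebody (elp_atoms P) (elp_eps P) b)"
      using w(5) by blast
    moreover have "\<forall>l\<in>elp_eps P. fatoms l \<subseteq> elp_atoms P" using w(4) by blast
    ultimately show "H \<subseteq> elp_atoms P \<and> (\<forall>f\<in>ered Psi ` B. fatoms f \<subseteq> elp_atoms P)"
      using ered_fatoms by blast
  qed
qed

lemma erules_restrict:
  assumes "wf_elp P"
  shows "erules Psi (elp_rules P) = erules (Psi \<inter> elp_eps P) (elp_rules P)"
proof (rule erules_cong)
  fix H B b assume "(H,B) \<in> elp_rules P" "b \<in> B"
  then have "wf_ebody (elp_atoms P) (elp_eps P) b" using wf_elpD(5)[OF assms] by blast
  then show "ered Psi b = ered (Psi \<inter> elp_eps P) b"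
    by (cases b) (auto simp: wf_ebody_def)
qed

lemma ep_reduct_union:
  "ep_reduct (elp_union P R) Psi =
     (elp_atoms P \<union> elp_atoms R, erules Psi (elp_rules P) \<union> erules Psi (elp_rules R))"
  unfolding ep_reduct_eq elp_union_def by (simp add: elp_atoms_def elp_rules_def erules_Un)

lemma eps_union: "elp_eps (elp_union P R) = elp_eps P \<union> elp_eps R"
  unfolding elp_union_def by (simp add: elp_eps_def)

lemma sat_restrict: "fatoms l \<subseteq> A \<Longrightarrow> sat (I \<inter> A) l = sat I l"
  using sat_agree[of l A "I \<inter> A" I] by blast

lemma SE_diag: "(I, I) \<in> SE (A, Q) \<longleftrightarrow> I \<in> Mods (A, Q)"
  unfolding SE_alt Mods_eq using modr_glr_self by auto

lemma realizable_SE_ne: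
  assumes "realizable P Phi" shows "SE (ep_reduct P Phi) \<noteq> {}"
proof -
  from assms obtain II where "II \<subseteq> Mods (ep_reduct P Phi)" "compatible II Phi (elp_eps P)"
    unfolding realizable_def by blast
  then obtain I where "I \<in> Mods (ep_reduct P Phi)" unfolding compatible_def by blast
  then have "(I,I) \<in> SE (ep_reduct P Phi)" using SE_diag[of I "fst (ep_reduct P Phi)" "snd (ep_reduct P Phi)"] by simp
  then show ?thesis by blast
qed

lemma cwv_transfer:
  assumes wf1: "wf_elp P1" and wf2: "wf_elp P2"
    and AA: "elp_atoms P1 = elp_atoms P2" and EE: "elp_eps P1 = elp_eps P2"
    and SEeq: "SE_fun P1 = SE_fun P2" and wfR: "wf_elp R"
    and c: "cwv_with (elp_union P1 R) Psi M"
  shows "cwv_with (elp_union P2 R) Psi M"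
proof -
  define A where "A = elp_atoms P1"
  define E where "E = elp_eps P1"
  define Phi where "Phi = Psi \<inter> E"
  define A' where "A' = A \<union> elp_atoms R"
  define S where "S = erules Psi (elp_rules R)"
  define Q1 where "Q1 = erules Phi (elp_rules P1)"
  define Q2 where "Q2 = erules Phi (elp_rules P2)"
  have red1: "ep_reduct (elp_union P1 R) Psi = (A', Q1 \<union> S)"
    unfolding ep_reduct_union A'_def A_def Q1_def S_def Phi_def E_def
    using erules_restrict[OF wf1] by simp
  have red2: "ep_reduct (elp_union P2 R) Psi = (A', Q2 \<union> S)"
    unfolding ep_reduct_union A'_def A_def Q2_def S_def Phi_def E_def
    using erules_restrict[OF wf2] AA EE by simp
  have ro1: "rules_over A Q1" unfolding A_def Q1_def using rules_over_erules[OF wf1] .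
  have ro2: "rules_over A Q2" unfolding A_def Q2_def using rules_over_erules[OF wf2] AA by simp
  have AA': "A \<subseteq> A'" unfolding A'_def by blast
  have epsU: "elp_eps (elp_union P2 R) = elp_eps (elp_union P1 R)" using EE eps_union by metis
  from c have Psi_sub: "Psi \<subseteq> E \<union> elp_eps R" and Mdef: "M = AS (A', Q1 \<union> S)"
    and comp: "compatible M Psi (E \<union> elp_eps R)"
    unfolding cwv_with_def red1 eps_union E_def by auto
  have litsA: "\<forall>l\<in>E. fatoms l \<subseteq> A" using wf_elpD(4)[OF wf1] unfolding A_def E_def by blast
  have er1: "ep_reduct P1 Phi = (A, Q1)" unfolding ep_reduct_eq A_def Q1_def by simp
  have er2: "ep_reduct P2 Phi = (A, Q2)" unfolding ep_reduct_eq A_def Q2_def using AA by simp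
  have real: "realizable P1 Phi"
    unfolding realizable_def
  proof (intro exI conjI)
    show "(\<lambda>I. I \<inter> A) ` M \<subseteq> Mods (ep_reduct P1 Phi)"
    proof
      fix J assume "J \<in> (\<lambda>I. I \<inter> A) ` M"
      then obtain I where I: "I \<in> M" "J = I \<inter> A" by blast
      from I(1) have "(I \<inter> A, I \<inter> A) \<in> SE (A, Q1)" unfolding Mdef AS_char[OF ro1 AA'] by blast
      then show "J \<in> Mods (ep_reduct P1 Phi)" unfolding er1 I(2) SE_diag .
    qed
    show "compatible ((\<lambda>I. I \<inter> A) ` M) Phi (elp_eps P1)"
      unfolding compatible_def
    proof (intro conjI ballI)
      show "(\<lambda>I. I \<inter> A) ` M \<noteq> {}" using comp unfolding compatible_def by blast
    next
      fix l assume l: "l \<in> Phi"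
      then have "l \<in> Psi" "fatoms l \<subseteq> A" unfolding Phi_def using litsA by auto
      then obtain I where "I \<in> M" "\<not> sat I l" using comp unfolding compatible_def by blast
      then show "\<exists>I\<in>(\<lambda>I. I \<inter> A) ` M. \<not> sat I l" using sat_restrict[OF \<open>fatoms l \<subseteq> A\<close>] by blast
    next
      fix l J assume l: "l \<in> elp_eps P1 - Phi" and J: "J \<in> (\<lambda>I. I \<inter> A) ` M"
      then have "l \<in> (E \<union> elp_eps R) - Psi" "fatoms l \<subseteq> A" unfolding Phi_def E_def using litsA E_def by auto
      then show "sat J l" using comp J sat_restrict[OF \<open>fatoms l \<subseteq> A\<close>] unfolding compatible_def by auto
    qed
  qed
  have PhiE: "Phi \<subseteq> elp_eps P1" unfolding Phi_def E_def by blast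
  have s1: "SE_fun P1 Phi = SE (A, Q1)" unfolding SE_fun_def using PhiE real er1 by simp
  have ne: "SE (A, Q1) \<noteq> {}" using realizable_SE_ne[OF real] er1 by simp
  have s2: "SE_fun P2 Phi = SE (A, Q2)"
  proof -
    have "SE_fun P2 Phi \<noteq> {}" using SEeq s1 ne by simp
    then have "Phi \<subseteq> elp_eps P2 \<and> realizable P2 Phi" unfolding SE_fun_def by (auto split: if_splits)
    then show ?thesis unfolding SE_fun_def er2 by simp
  qed
  have SEq: "SE (A, Q1) = SE (A, Q2)" using s1 s2 SEeq by simp
  have ASeq: "AS (A', Q1 \<union> S) = AS (A', Q2 \<union> S)"
    by (rule set_eqI) (simp only: AS_char[OF ro1 AA'] AS_char[OF ro2 AA'] SEq)
  show ?thesis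
    using c unfolding cwv_with_def red1 red2 epsU ASeq by (metis (no_types, lifting))
qed

lemma cwv_iff:
  assumes "wf_elp P1" "wf_elp P2" "elp_atoms P1 = elp_atoms P2" "elp_eps P1 = elp_eps P2"
    "SE_fun P1 = SE_fun P2" "wf_elp R"
  shows "cwv_with (elp_union P1 R) Psi M \<longleftrightarrow> cwv_with (elp_union P2 R) Psi M"
  apply (rule iffI)
   apply (erule cwv_transfer[OF assms])
  apply (erule cwv_transfer[OF assms(2,1) assms(3-5)[symmetric] assms(6)])
  done

lemma CWV_WV_eq:
  assumes "wf_elp P1" "wf_elp P2" "elp_atoms P1 = elp_atoms P2" "elp_eps P1 = elp_eps P2"
    "SE_fun P1 = SE_fun P2" "wf_elp R"
  shows "CWV (elp_union P1 R) = CWV (elp_union P2 R)" "WV (elp_union P1 R) = WV (elp_union P2 R)"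
  unfolding CWV_def WV_def using cwv_iff[OF assms] by simp_all

lemma AS_slice:
  assumes "Phi \<subseteq> Psi" "\<forall>l\<in>Psi - Phi. \<not> sat M l"
  shows "M \<in> AS (A', erules Psi R \<union> S) \<longleftrightarrow> M \<in> AS (A', erules Phi R \<union> S)"
  unfolding AS_alt fst_conv snd_conv modr_Un glr_Un erules_slice[OF assms] ..

lemma modr_collect1: "modr {f x | x. P x} M \<longleftrightarrow> (\<forall>x. P x \<longrightarrow> sat_rule M (f x))"
  unfolding modr_def by blast

lemma modr_collect2: "modr {f x y | x y. P x y} M \<longleftrightarrow> (\<forall>x y. P x y \<longrightarrow> sat_rule M (f x y))"
  unfolding modr_def by blast

definition objify :: "'a prule set \<Rightarrow> 'a erule set" where
  "objify S = (\<lambda>(H,B). (H, Obj ` B)) ` S"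

lemma erules_objify: "erules Psi (objify S) = S"
proof -
  have "(\<lambda>(H,B). (H, ered Psi ` B)) ((\<lambda>(H,B). (H, Obj ` B)) x) = x" for x :: "'a prule"
    by (cases x) (simp add: image_image)
  then show ?thesis unfolding erules_image objify_def image_comp comp_def by simp
qed

locale constr =
  fixes A :: "'a set" and II :: "'a set set" and g :: "'a set \<Rightarrow> 'a" and g0 :: 'a
    and X Y :: "'a set"
  assumes finA: "finite A" and II_sub: "\<forall>I\<in>II. I \<subseteq> A" and inj: "inj_on g II"
    and gA: "\<forall>I\<in>II. g I \<notin> A" and g0A: "g0 \<notin> A" and g0g: "\<forall>I\<in>II. g I \<noteq> g0"
    and XY: "X \<subseteq> Y" and YA: "Y \<subseteq> A"
begin

definition "D = {(insert g0 (g ` II), {}) :: 'a prule}"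
definition "Sel1 = {({a}, {Atm (g I)}) | I a. I \<in> II \<and> a \<in> I}"
definition "Sel2 = {({}, {Atm (g I), Atm a}) | I a. I \<in> II \<and> a \<in> A \<and> a \<notin> I}"
definition "T1 = {({a}, {Atm g0}) | a. a \<in> X}"
definition "T2 = {({a}, {Atm g0, Atm c}) | a c. a \<in> Y - X \<and> c \<in> Y - X}"
definition "T3 = {({}, {Atm g0, Atm a}) | a. a \<in> A \<and> a \<notin> Y}"
definition "T4 = {({}, {Atm g0, Neg (Atm b)}) | b. b \<in> Y - X}"
definition "S = D \<union> Sel1 \<union> Sel2 \<union> T1 \<union> T2 \<union> T3 \<union> T4"
definition "AR = A \<union> insert g0 (g ` II)"

lemma modr_D: "modr D M \<longleftrightarrow> M \<inter> insert g0 (g ` II) \<noteq> {}"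
  by (simp add: D_def modr_def sat_rule_def)

lemma modr_Sel1: "modr Sel1 M \<longleftrightarrow> (\<forall>I\<in>II. g I \<in> M \<longrightarrow> I \<subseteq> M)"
  unfolding Sel1_def modr_collect1 modr_collect2 by (auto simp: sat_rule_def)

lemma modr_Sel2: "modr Sel2 M \<longleftrightarrow> (\<forall>I\<in>II. g I \<in> M \<longrightarrow> (\<forall>a\<in>A. a \<in> M \<longrightarrow> a \<in> I))"
  unfolding Sel2_def modr_collect1 modr_collect2 by (auto simp: sat_rule_def)

lemma modr_T1: "modr T1 M \<longleftrightarrow> (g0 \<in> M \<longrightarrow> X \<subseteq> M)"
  unfolding T1_def modr_collect1 modr_collect2 by (auto simp: sat_rule_def)

lemma modr_T2: "modr T2 M \<longleftrightarrow> (g0 \<in> M \<longrightarrow> (\<forall>c\<in>Y - X. c \<in> M \<longrightarrow> Y - X \<subseteq> M))"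
  unfolding T2_def modr_collect1 modr_collect2 by (auto simp: sat_rule_def)

lemma modr_T3: "modr T3 M \<longleftrightarrow> (g0 \<in> M \<longrightarrow> (\<forall>a\<in>A. a \<in> M \<longrightarrow> a \<in> Y))"
  unfolding T3_def modr_collect1 modr_collect2 by (auto simp: sat_rule_def)

lemma modr_T4: "modr T4 M \<longleftrightarrow> (g0 \<in> M \<longrightarrow> Y - X \<subseteq> M)"
  unfolding T4_def modr_collect1 modr_collect2 by (auto simp: sat_rule_def)

lemma glr_T4: "glr T4 M = {({}, {Atm g0}) | b. b \<in> Y - X \<and> b \<notin> M}"
proof -
  have h: "Atm ` {a. Atm a \<in> {Atm g0, Neg (Atm b)}} = {Atm g0}" for b by auto
  have "glr T4 M = {(fst (({}, {Atm g0, Neg (Atm b)}) :: 'a prule), Atm ` {a. Atm a \<in> snd (({}, {Atm g0, Neg (Atm b)}) :: 'a prule)}) | b.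
     b \<in> Y - X \<and> (\<forall>l. Neg l \<in> snd (({}, {Atm g0, Neg (Atm b)}) :: 'a prule) \<longrightarrow> sat M (Neg l))}"
    unfolding glr_def T4_def by blast
  also have "\<dots> = {({}, {Atm g0}) | b. b \<in> Y - X \<and> b \<notin> M}"
    unfolding fst_conv snd_conv h by auto
  finally show ?thesis .
qed

lemma modr_glr_T4: "modr (glr T4 M) M' \<longleftrightarrow> (g0 \<in> M' \<longrightarrow> Y - X \<subseteq> M)"
  unfolding glr_T4 modr_collect1 by (auto simp: sat_rule_def)

lemma glr_S: "glr S M = D \<union> Sel1 \<union> Sel2 \<union> T1 \<union> T2 \<union> T3 \<union> glr T4 M"
proof -
  have "glr Q M = Q" if "Q \<in> {D, Sel1, Sel2, T1, T2, T3}" for Q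
    using that by (intro glr_atoms) (auto simp: D_def Sel1_def Sel2_def T1_def T2_def T3_def)
  then show ?thesis unfolding S_def glr_Un by simp
qed

lemmas modr_parts = modr_D modr_Sel1 modr_Sel2 modr_T1 modr_T2 modr_T3

lemma modr_S: "modr S M \<longleftrightarrow> modr D M \<and> modr Sel1 M \<and> modr Sel2 M \<and> modr T1 M \<and> modr T2 M
   \<and> modr T3 M \<and> modr T4 M"
  unfolding S_def by simp

lemma modr_glr_S: "modr (glr S M) M' \<longleftrightarrow> modr D M' \<and> modr Sel1 M' \<and> modr Sel2 M' \<and> modr T1 M'
   \<and> modr T2 M' \<and> modr T3 M' \<and> modr (glr T4 M) M'"
  unfolding glr_S by simp

end

context constr begin

lemma gnA: "I \<in> II \<Longrightarrow> g I \<notin> A" using gA by blast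
lemma g_eq: "I \<in> II \<Longrightarrow> J \<in> II \<Longrightarrow> g I = g J \<Longrightarrow> I = J" using inj unfolding inj_on_def by blast
lemma ins_inter: "x \<notin> A \<Longrightarrow> Z \<subseteq> A \<Longrightarrow> insert x Z \<inter> A = Z" by blast
lemma AAR: "A \<subseteq> AR" unfolding AR_def by blast

lemma form:
  assumes ro: "rules_over A Q" and M: "M \<in> AS (AR, Q \<union> S)"
  shows "(\<exists>I\<in>II. M = insert (g I) I) \<or> M = insert g0 Y"
proof -
  from M have MAR: "M \<subseteq> AR" and mS: "modr S M" and se: "(M \<inter> A, M \<inter> A) \<in> SE (A, Q)"
    and mini: "\<not>(\<exists>M'. M' \<subset> M \<and> (M' \<inter> A, M \<inter> A) \<in> SE (A, Q) \<and> modr (glr S M) M')"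
    unfolding AS_char[OF ro AAR] by auto
  from mS have mD: "M \<inter> insert g0 (g ` II) \<noteq> {}" and m1: "\<forall>I\<in>II. g I \<in> M \<longrightarrow> I \<subseteq> M"
    and m2: "\<forall>I\<in>II. g I \<in> M \<longrightarrow> (\<forall>a\<in>A. a \<in> M \<longrightarrow> a \<in> I)"
    and t1: "g0 \<in> M \<longrightarrow> X \<subseteq> M" and t3: "g0 \<in> M \<longrightarrow> (\<forall>a\<in>A. a \<in> M \<longrightarrow> a \<in> Y)"
    and t4: "g0 \<in> M \<longrightarrow> Y - X \<subseteq> M"
    unfolding modr_S modr_parts modr_T4 by auto
  show ?thesis
  proof (cases "\<exists>I\<in>II. g I \<in> M")
    case True
    then obtain I where I: "I \<in> II" "g I \<in> M" by blast
    have IA: "I \<subseteq> A" using II_sub I(1) by blast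
    have MA: "M \<inter> A = I" using m1 m2 I IA by blast
    define M' where "M' = insert (g I) I"
    have sub: "M' \<subseteq> M" using m1 I unfolding M'_def by blast
    have M'A: "M' \<inter> A = I" unfolding M'_def using ins_inter[OF gnA[OF I(1)] IA] .
    have gJ: "J = I" if "J \<in> II" "g J \<in> M'" for J
    proof -
      have "g J \<notin> I" using gnA[OF that(1)] IA by blast
      then have "g J = g I" using that(2) unfolding M'_def by blast
      then show ?thesis using g_eq[OF that(1) I(1)] by blast
    qed
    have g0M': "g0 \<notin> M'" unfolding M'_def using g0g I(1) g0A IA by blast
    have mod': "modr (glr S M) M'"
      unfolding modr_glr_S modr_parts modr_glr_T4
    proof (intro conjI)
      show "M' \<inter> insert g0 (g ` II) \<noteq> {}" using I(1) unfolding M'_def by blast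
      show "\<forall>J\<in>II. g J \<in> M' \<longrightarrow> J \<subseteq> M'" using gJ unfolding M'_def by blast
      show "\<forall>J\<in>II. g J \<in> M' \<longrightarrow> (\<forall>a\<in>A. a \<in> M' \<longrightarrow> a \<in> J)" using gJ M'A by blast
    qed (use g0M' in auto)
    have "M = M'"
    proof (rule ccontr)
      assume "M \<noteq> M'"
      then have "M' \<subset> M" using sub by blast
      moreover have "(M' \<inter> A, M \<inter> A) \<in> SE (A, Q)" using se unfolding M'A MA .
      ultimately show False using mini mod' by blast
    qed
    then show ?thesis using I(1) unfolding M'_def by blast
  next
    case False
    then have g0: "g0 \<in> M" using mD by blast
    have "M = insert g0 Y"
    proof
      show "M \<subseteq> insert g0 Y"
      proof
        fix m assume m: "m \<in> M"
        then have "m \<in> A \<or> m = g0 \<or> m \<in> g ` II" using MAR unfolding AR_def by blast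
        then show "m \<in> insert g0 Y" using t3 g0 m False by blast
      qed
      show "insert g0 Y \<subseteq> M" using g0 t1 t4 by blast
    qed
    then show ?thesis by blast
  qed
qed

lemma branch:
  assumes ro: "rules_over A Q" and I: "I \<in> II"
  shows "insert (g I) I \<in> AS (AR, Q \<union> S) \<longleftrightarrow> I \<in> Mods (A, Q)"
proof -
  have IA: "I \<subseteq> A" using II_sub I by blast
  have MA: "insert (g I) I \<inter> A = I" using ins_inter[OF gnA[OF I] IA] .
  have gJ: "J = I" if "J \<in> II" "g J \<in> insert (g I) I" for J
  proof -
    have "g J \<notin> I" using gnA[OF that(1)] IA by blast
    then have "g J = g I" using that(2) by blast
    then show ?thesis using g_eq[OF that(1) I] by blast
  qed
  have g0M: "g0 \<notin> insert (g I) I" using g0g I g0A IA by blast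
  show ?thesis
  proof
    assume "insert (g I) I \<in> AS (AR, Q \<union> S)"
    then have "(I, I) \<in> SE (A, Q)" unfolding AS_char[OF ro AAR] MA by blast
    then show "I \<in> Mods (A, Q)" using SE_diag by blast
  next
    assume mods: "I \<in> Mods (A, Q)"
    have sub: "insert (g I) I \<subseteq> AR" using I IA unfolding AR_def by blast
    have mS: "modr S (insert (g I) I)"
      unfolding modr_S modr_parts modr_T4
    proof (intro conjI)
      show "insert (g I) I \<inter> insert g0 (g ` II) \<noteq> {}" using I by blast
      show "\<forall>J\<in>II. g J \<in> insert (g I) I \<longrightarrow> J \<subseteq> insert (g I) I" using gJ by blast
      show "\<forall>J\<in>II. g J \<in> insert (g I) I \<longrightarrow> (\<forall>a\<in>A. a \<in> insert (g I) I \<longrightarrow> a \<in> J)"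
        using gJ MA by blast
    qed (use g0M in auto)
    have se: "(I, I) \<in> SE (A, Q)" using mods SE_diag by blast
    have mini: "\<not>(\<exists>M'. M' \<subset> insert (g I) I \<and> modr (glr S (insert (g I) I)) M')"
    proof
      assume "\<exists>M'. M' \<subset> insert (g I) I \<and> modr (glr S (insert (g I) I)) M'"
      then obtain M' where M': "M' \<subset> insert (g I) I" "modr (glr S (insert (g I) I)) M'" by blast
      then have d: "M' \<inter> insert g0 (g ` II) \<noteq> {}" and s1: "\<forall>J\<in>II. g J \<in> M' \<longrightarrow> J \<subseteq> M'"
        unfolding modr_glr_S modr_parts by auto
      from d obtain x where x: "x \<in> M'" "x \<in> insert g0 (g ` II)" by blast
      then have "x \<noteq> g0" using g0M M'(1) by blast
      then obtain J where J: "J \<in> II" "x = g J" using x by blast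
      then have "J = I" using gJ x M'(1) by blast
      then have "g I \<in> M'" "I \<subseteq> M'" using J x s1 I by auto
      then show False using M'(1) by blast
    qed
    show "insert (g I) I \<in> AS (AR, Q \<union> S)"
      unfolding AS_char[OF ro AAR] MA using sub mS se mini by blast
  qed
qed

lemma test:
  assumes ro: "rules_over A Q"
  shows "insert g0 Y \<in> AS (AR, Q \<union> S) \<longleftrightarrow> (Y, Y) \<in> SE (A, Q) \<and> \<not>(X \<noteq> Y \<and> (X, Y) \<in> SE (A, Q))"
proof -
  define M where "M = insert g0 Y"
  have MA: "M \<inter> A = Y" unfolding M_def using ins_inter[OF g0A YA] .
  have gM: "g J \<notin> M" if "J \<in> II" for J using that gnA g0g YA unfolding M_def by blast
  have g0Y: "g0 \<notin> Y" using g0A YA by blast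
  have sub: "M \<subseteq> AR" unfolding M_def AR_def using YA by blast
  have mS: "modr S M"
    unfolding modr_S modr_parts modr_T4
  proof (intro conjI)
    show "M \<inter> insert g0 (g ` II) \<noteq> {}" unfolding M_def by blast
    show "\<forall>I\<in>II. g I \<in> M \<longrightarrow> I \<subseteq> M" using gM by blast
    show "\<forall>I\<in>II. g I \<in> M \<longrightarrow> (\<forall>a\<in>A. a \<in> M \<longrightarrow> a \<in> I)" using gM by blast
    show "g0 \<in> M \<longrightarrow> X \<subseteq> M" using XY unfolding M_def by blast
    show "g0 \<in> M \<longrightarrow> (\<forall>c\<in>Y - X. c \<in> M \<longrightarrow> Y - X \<subseteq> M)" unfolding M_def by blast
    show "g0 \<in> M \<longrightarrow> (\<forall>a\<in>A. a \<in> M \<longrightarrow> a \<in> Y)" using MA by blast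
    show "g0 \<in> M \<longrightarrow> Y - X \<subseteq> M" unfolding M_def by blast
  qed
  show ?thesis
  proof
    assume "insert g0 Y \<in> AS (AR, Q \<union> S)"
    then have se: "(Y, Y) \<in> SE (A, Q)"
      and mini: "\<not>(\<exists>M'. M' \<subset> M \<and> (M' \<inter> A, M \<inter> A) \<in> SE (A, Q) \<and> modr (glr S M) M')"
      unfolding AS_char[OF ro AAR] M_def[symmetric] MA by auto
    have "\<not>(X \<noteq> Y \<and> (X, Y) \<in> SE (A, Q))"
    proof
      assume h: "X \<noteq> Y \<and> (X, Y) \<in> SE (A, Q)"
      define M' where "M' = insert g0 X"
      have XA: "X \<subseteq> A" using XY YA by blast
      have M'A: "M' \<inter> A = X" unfolding M'_def using ins_inter[OF g0A XA] .
      have "X \<subset> Y" using h XY by blast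
      then obtain y where y: "y \<in> Y" "y \<notin> X" by blast
      have "M' \<subseteq> M" unfolding M'_def M_def using XY by blast
      moreover have "y \<in> M" "y \<notin> M'" unfolding M'_def M_def using y g0Y by auto
      ultimately have "M' \<subset> M" by blast
      moreover have "(M' \<inter> A, M \<inter> A) \<in> SE (A, Q)" unfolding M'A MA using h by blast
      moreover have "modr (glr S M) M'"
        unfolding modr_glr_S modr_parts modr_glr_T4
      proof (intro conjI)
        have gM': "g I \<notin> M'" if "I \<in> II" for I using gM[OF that] XY unfolding M'_def M_def by blast
        show "M' \<inter> insert g0 (g ` II) \<noteq> {}" unfolding M'_def by blast
        show "\<forall>I\<in>II. g I \<in> M' \<longrightarrow> I \<subseteq> M'" using gM' by blast
        show "\<forall>I\<in>II. g I \<in> M' \<longrightarrow> (\<forall>a\<in>A. a \<in> M' \<longrightarrow> a \<in> I)" using gM' by blast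
        show "g0 \<in> M' \<longrightarrow> X \<subseteq> M'" unfolding M'_def by blast
        show "g0 \<in> M' \<longrightarrow> (\<forall>c\<in>Y - X. c \<in> M' \<longrightarrow> Y - X \<subseteq> M')" using g0Y unfolding M'_def by blast
        show "g0 \<in> M' \<longrightarrow> (\<forall>a\<in>A. a \<in> M' \<longrightarrow> a \<in> Y)" using XY g0A unfolding M'_def by blast
        show "g0 \<in> M' \<longrightarrow> Y - X \<subseteq> M" unfolding M_def by blast
      qed
      ultimately show False using mini by blast
    qed
    then show "(Y, Y) \<in> SE (A, Q) \<and> \<not>(X \<noteq> Y \<and> (X, Y) \<in> SE (A, Q))" using se by blast
  next
    assume h: "(Y, Y) \<in> SE (A, Q) \<and> \<not>(X \<noteq> Y \<and> (X, Y) \<in> SE (A, Q))"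
    have mini: "\<not>(\<exists>M'. M' \<subset> M \<and> (M' \<inter> A, M \<inter> A) \<in> SE (A, Q) \<and> modr (glr S M) M')"
    proof
      assume "\<exists>M'. M' \<subset> M \<and> (M' \<inter> A, M \<inter> A) \<in> SE (A, Q) \<and> modr (glr S M) M'"
      then obtain M' where M': "M' \<subset> M" "(M' \<inter> A, Y) \<in> SE (A, Q)" "modr (glr S M) M'"
        unfolding MA by blast
      from M'(3) have d: "M' \<inter> insert g0 (g ` II) \<noteq> {}" and t1: "g0 \<in> M' \<longrightarrow> X \<subseteq> M'"
        and t2: "g0 \<in> M' \<longrightarrow> (\<forall>c\<in>Y - X. c \<in> M' \<longrightarrow> Y - X \<subseteq> M')"
        unfolding modr_glr_S modr_parts by auto
      from d obtain x where x: "x \<in> M'" "x \<in> insert g0 (g ` II)" by blast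
      have "x \<in> M" using x(1) M'(1) by blast
      then have "x \<notin> g ` II" using gM by blast
      then have g0M': "g0 \<in> M'" using x by blast
      show False
      proof (cases "\<exists>c\<in>Y - X. c \<in> M'")
        case True
        then have "Y \<subseteq> M'" using t2 t1 g0M' by blast
        then show False using g0M' M'(1) unfolding M_def by blast
      next
        case False
        have "M' \<inter> A = X"
        proof (rule equalityI)
          show "M' \<inter> A \<subseteq> X"
          proof
            fix z assume z: "z \<in> M' \<inter> A"
            then have "z \<in> M \<inter> A" using M'(1) by blast
            then have "z \<in> Y" using MA by simp
            then show "z \<in> X" using False z by blast
          qed
          show "X \<subseteq> M' \<inter> A" using t1 g0M' XY YA by blast
        qed
        then have "(X, Y) \<in> SE (A, Q)" using M'(2) by simp
        then have "X = Y" using h by blast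
        then show False using t1 g0M' M'(1) unfolding M_def by blast
      qed
    qed
    show "insert g0 Y \<in> AS (AR, Q \<union> S)"
    proof -
      have se: "(M \<inter> A, M \<inter> A) \<in> SE (A, Q)" using h MA by simp
      have "M \<in> AS (AR, Q \<union> S)" unfolding AS_char[OF ro AAR] using sub mS se mini by blast
      then show ?thesis unfolding M_def .
    qed
  qed
qed

lemma finII: "finite II"
  using finA II_sub by (meson Pow_iff finite_Pow_iff finite_subset subsetI)

lemma finite_S: "finite S"
proof -
  have fA: "finite {a. a \<in> A}" using finA by simp
  have fII: "finite {I. I \<in> II}" using finII by simp
  have "Sel1 \<subseteq> {({a}, {Atm (g I)}) | I a. I \<in> II \<and> a \<in> A}" unfolding Sel1_def using II_sub by blast
  then have f1: "finite Sel1" by (rule finite_subset[OF _ finite_image_set2[OF fII fA]])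
  have "Sel2 \<subseteq> {({}, {Atm (g I), Atm a}) | I a. I \<in> II \<and> a \<in> A}" unfolding Sel2_def by blast
  then have f2: "finite Sel2" by (rule finite_subset[OF _ finite_image_set2[OF fII fA]])
  have "T1 \<subseteq> {({a}, {Atm g0}) | a. a \<in> A}" unfolding T1_def using XY YA by blast
  then have f3: "finite T1" by (rule finite_subset[OF _ finite_image_set[OF fA]])
  have "T2 \<subseteq> {({a}, {Atm g0, Atm c}) | a c. a \<in> A \<and> c \<in> A}" unfolding T2_def using YA by blast
  then have f4: "finite T2" by (rule finite_subset[OF _ finite_image_set2[OF fA fA]])
  have "T3 \<subseteq> {({}, {Atm g0, Atm a}) | a. a \<in> A}" unfolding T3_def by blast
  then have f5: "finite T3" by (rule finite_subset[OF _ finite_image_set[OF fA]])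
  have "T4 \<subseteq> {({}, {Atm g0, Neg (Atm b)}) | b. b \<in> A}" unfolding T4_def using YA by blast
  then have f6: "finite T4" by (rule finite_subset[OF _ finite_image_set[OF fA]])
  show ?thesis unfolding S_def using f1 f2 f3 f4 f5 f6 by (simp add: D_def)
qed

lemma finite_AR: "finite AR" unfolding AR_def using finA finII by simp

lemma S_wf: "\<forall>(H,B)\<in>S. H \<subseteq> AR \<and> (\<forall>f\<in>B. plain_belem f \<and> fatoms f \<subseteq> AR)"
proof -
  have pa: "plain_belem (Atm a)" for a :: 'a unfolding plain_belem_def by blast
  have pn: "plain_belem (Neg (Atm a))" for a :: 'a unfolding plain_belem_def is_literal_def by blast
  have XA: "X \<subseteq> A" using XY YA by blast
  have "\<forall>(H,B)\<in>D. H \<subseteq> AR \<and> (\<forall>f\<in>B. plain_belem f \<and> fatoms f \<subseteq> AR)"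
    unfolding D_def AR_def by auto
  moreover have "\<forall>(H,B)\<in>Sel1. H \<subseteq> AR \<and> (\<forall>f\<in>B. plain_belem f \<and> fatoms f \<subseteq> AR)"
    unfolding Sel1_def AR_def using pa II_sub by auto
  moreover have "\<forall>(H,B)\<in>Sel2. H \<subseteq> AR \<and> (\<forall>f\<in>B. plain_belem f \<and> fatoms f \<subseteq> AR)"
    unfolding Sel2_def AR_def using pa by auto
  moreover have "\<forall>(H,B)\<in>T1. H \<subseteq> AR \<and> (\<forall>f\<in>B. plain_belem f \<and> fatoms f \<subseteq> AR)"
    unfolding T1_def AR_def using pa XA by auto
  moreover have "\<forall>(H,B)\<in>T2. H \<subseteq> AR \<and> (\<forall>f\<in>B. plain_belem f \<and> fatoms f \<subseteq> AR)"
    unfolding T2_def AR_def using pa YA by auto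
  moreover have "\<forall>(H,B)\<in>T3. H \<subseteq> AR \<and> (\<forall>f\<in>B. plain_belem f \<and> fatoms f \<subseteq> AR)"
    unfolding T3_def AR_def using pa by auto
  moreover have "\<forall>(H,B)\<in>T4. H \<subseteq> AR \<and> (\<forall>f\<in>B. plain_belem f \<and> fatoms f \<subseteq> AR)"
    unfolding T4_def AR_def using pa pn YA by auto
  ultimately show ?thesis unfolding S_def ball_Un by blast
qed

definition "Rp = (AR, {}, objify S)"

lemma plain_Rp: "plain_elp Rp"
proof -
  have "finite (objify S)" unfolding objify_def using finite_S by simp
  moreover have "\<forall>(H,B)\<in>objify S. H \<subseteq> AR \<and> (\<forall>b\<in>B. wf_ebody AR {} b)"
    using S_wf unfolding objify_def wf_ebody_def by fastforce
  ultimately show ?thesis unfolding plain_elp_def Rp_def wf_elp_def elp_eps_def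
    using finite_AR by simp
qed

end

context constr begin

lemma generic:
  assumes wfW: "wf_elp W" and wfL: "wf_elp L" and AW: "elp_atoms W = A" and AL: "elp_atoms L = A"
    and EL: "elp_eps L = elp_eps W" and PhiE: "Phi \<subseteq> elp_eps W"
    and IIm: "II \<subseteq> Mods (ep_reduct W Phi)" and comp: "compatible II Phi (elp_eps W)"
    and HW: "(Y,Y) \<in> SE (ep_reduct W Phi) \<Longrightarrow> \<not>(X \<noteq> Y \<and> (X,Y) \<in> SE (ep_reduct W Phi))
       \<Longrightarrow> \<forall>l\<in>elp_eps W - Phi. sat Y l"
    and HL: "\<not> realizable L Phi \<or> ((Y,Y) \<in> SE (ep_reduct L Phi) \<and> \<not>(X \<noteq> Y \<and> (X,Y) \<in> SE (ep_reduct L Phi))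
       \<and> \<not>((Y,Y) \<in> SE (ep_reduct W Phi) \<and> \<not>(X \<noteq> Y \<and> (X,Y) \<in> SE (ep_reduct W Phi))))"
  shows "CWV (elp_union W Rp) \<noteq> CWV (elp_union L Rp) \<and> WV (elp_union W Rp) \<noteq> WV (elp_union L Rp)"
proof -
  define E where "E = elp_eps W"
  define QW where "QW Psi = erules Psi (elp_rules W)" for Psi
  define QL where "QL Psi = erules Psi (elp_rules L)" for Psi
  have RpA: "elp_atoms Rp = AR" "elp_rules Rp = objify S" "elp_eps Rp = {}"
    by (simp_all add: Rp_def elp_atoms_def elp_rules_def elp_eps_def)
  have AUR: "A \<union> AR = AR" using AAR by blast
  have redW: "ep_reduct (elp_union W Rp) Psi = (AR, QW Psi \<union> S)" for Psi
    unfolding ep_reduct_union QW_def AW RpA erules_objify AUR ..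
  have redL: "ep_reduct (elp_union L Rp) Psi = (AR, QL Psi \<union> S)" for Psi
    unfolding ep_reduct_union QL_def AL RpA erules_objify AUR ..
  have epsW: "elp_eps (elp_union W Rp) = E" unfolding eps_union RpA E_def by simp
  have epsL: "elp_eps (elp_union L Rp) = E" unfolding eps_union RpA E_def EL by simp
  have roW: "rules_over A (QW Psi)" for Psi unfolding QW_def using rules_over_erules[OF wfW] AW by simp
  have roL: "rules_over A (QL Psi)" for Psi unfolding QL_def using rules_over_erules[OF wfL] AL by simp
  have erW: "ep_reduct W Psi = (A, QW Psi)" for Psi unfolding ep_reduct_eq QW_def AW ..
  have erL: "ep_reduct L Psi = (A, QL Psi)" for Psi unfolding ep_reduct_eq QL_def AL ..
  have litA: "fatoms l \<subseteq> A" if "l \<in> E" for l using wf_elpD(4)[OF wfW] that AW unfolding E_def by blast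
  have satI: "sat (insert (g I) I) l = sat I l" if "I \<in> II" "l \<in> E" for I l
  proof -
    have "insert (g I) I \<inter> A = I \<inter> A" using gnA[OF that(1)] by blast
    then show ?thesis using sat_agree[OF litA[OF that(2)]] by blast
  qed
  have satY: "sat (insert g0 Y) l = sat Y l" if "l \<in> E" for l
  proof -
    have "insert g0 Y \<inter> A = Y \<inter> A" using g0A by blast
    then show ?thesis using sat_agree[OF litA[OF that]] by blast
  qed
  have compD: "II \<noteq> {}" "\<forall>l\<in>Phi. \<exists>I\<in>II. \<not> sat I l" "\<forall>l\<in>E - Phi. \<forall>I\<in>II. sat I l"
    using comp unfolding compatible_def E_def by auto
  define M1 where "M1 = AS (AR, QW Phi \<union> S)"
  have f1: "(\<exists>I\<in>II. m = insert (g I) I) \<or> m = insert g0 Y" if "m \<in> AS (AR, QW Psi \<union> S)" for m Psi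
    using form[OF roW that] .
  have f2: "insert (g I) I \<in> M1" if "I \<in> II" for I
    unfolding M1_def branch[OF roW that] using IIm that erW by auto
  have testW: "insert g0 Y \<in> M1 \<longleftrightarrow>
      (Y, Y) \<in> SE (ep_reduct W Phi) \<and> \<not>(X \<noteq> Y \<and> (X, Y) \<in> SE (ep_reduct W Phi))"
    unfolding M1_def erW using test[OF roW] .
  have compM1: "compatible M1 Phi E"
    unfolding compatible_def
  proof (intro conjI ballI)
    show "M1 \<noteq> {}" using compD(1) f2 by blast
  next
    fix l assume l: "l \<in> Phi"
    then obtain I where "I \<in> II" "\<not> sat I l" using compD(2) by blast
    moreover have "l \<in> E" using l PhiE unfolding E_def by blast
    ultimately show "\<exists>I\<in>M1. \<not> sat I l" using f2 satI by metis
  next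
    fix l m assume l: "l \<in> E - Phi" and m: "m \<in> M1"
    from f1[OF m[unfolded M1_def]] show "sat m l"
    proof
      assume "\<exists>I\<in>II. m = insert (g I) I"
      then obtain I where "I \<in> II" "m = insert (g I) I" by blast
      then show ?thesis using satI compD(3) l by auto
    next
      assume my: "m = insert g0 Y"
      then have "insert g0 Y \<in> M1" using m by simp
      then have "\<forall>l\<in>elp_eps W - Phi. sat Y l" using testW HW by blast
      then show ?thesis using my satY l unfolding E_def by auto
    qed
  qed
  have PhiE': "Phi \<subseteq> E" using PhiE unfolding E_def .
  have cwvW: "cwv_with (elp_union W Rp) Phi M1"
    unfolding cwv_with_def redW epsW M1_def[symmetric] using PhiE' compM1 by simp
  have maxW: "\<not>(\<exists>Psi M'. cwv_with (elp_union W Rp) Psi M' \<and> Phi \<subset> Psi)"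
  proof
    assume "\<exists>Psi M'. cwv_with (elp_union W Rp) Psi M' \<and> Phi \<subset> Psi"
    then obtain Psi M' where c: "cwv_with (elp_union W Rp) Psi M'" and pp: "Phi \<subset> Psi" by blast
    from c have PsiE: "Psi \<subseteq> E" and M'd: "M' = AS (AR, QW Psi \<union> S)" and cM': "compatible M' Psi E"
      unfolding cwv_with_def redW epsW by auto
    have key: "\<not> sat (insert g0 Y) l \<and> insert g0 Y \<in> M'" if l: "l \<in> Psi - Phi" for l
    proof -
      obtain m where m: "m \<in> M'" "\<not> sat m l" using cM' l unfolding compatible_def by blast
      have lE: "l \<in> E - Phi" using l PsiE by blast
      have "m = insert g0 Y"
      proof (rule ccontr)
        assume "m \<noteq> insert g0 Y"
        then obtain I where "I \<in> II" "m = insert (g I) I" using f1 m(1) M'd by blast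
        then show False using satI compD(3) lE m(2) by auto
      qed
      then show ?thesis using m by simp
    qed
    obtain l0 where l0: "l0 \<in> Psi - Phi" using pp by blast
    have inM': "insert g0 Y \<in> AS (AR, QW Psi \<union> S)" using key[OF l0] M'd by simp
    have "\<forall>l\<in>Psi - Phi. \<not> sat (insert g0 Y) l" using key by blast
    then have "insert g0 Y \<in> M1"
      using inM' AS_slice[of Phi Psi "insert g0 Y" AR "elp_rules W" S] pp
      unfolding M1_def QW_def by blast
    then have "sat (insert g0 Y) l0" using compM1 l0 PsiE unfolding compatible_def by blast
    then show False using key[OF l0] by blast
  qed
  have WV1: "M1 \<in> WV (elp_union W Rp)" unfolding WV_def using cwvW maxW by blast
  have CWV1: "M1 \<in> CWV (elp_union W Rp)" unfolding CWV_def using cwvW by blast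
  have notL: "\<not> cwv_with (elp_union L Rp) Psi M1" for Psi
  proof
    assume c: "cwv_with (elp_union L Rp) Psi M1"
    then have PsiE: "Psi \<subseteq> E" and M1d: "M1 = AS (AR, QL Psi \<union> S)" and cM: "compatible M1 Psi E"
      unfolding cwv_with_def redL epsL by auto
    have "Psi = Phi"
    proof
      show "Psi \<subseteq> Phi"
      proof
        fix l assume l: "l \<in> Psi"
        then obtain m where "m \<in> M1" "\<not> sat m l" using cM unfolding compatible_def by blast
        then show "l \<in> Phi" using compM1 l PsiE unfolding compatible_def by blast
      qed
      show "Phi \<subseteq> Psi"
      proof
        fix l assume l: "l \<in> Phi"
        then obtain m where "m \<in> M1" "\<not> sat m l" using compM1 unfolding compatible_def by blast
        then show "l \<in> Psi" using cM l PhiE' unfolding compatible_def by blast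
      qed
    qed
    then have M1L: "M1 = AS (AR, QL Phi \<union> S)" using M1d by simp
    from HL show False
    proof
      assume nr: "\<not> realizable L Phi"
      have "II \<subseteq> Mods (ep_reduct L Phi)"
      proof
        fix I assume I: "I \<in> II"
        then have "insert (g I) I \<in> AS (AR, QL Phi \<union> S)" using f2 M1L by blast
        then show "I \<in> Mods (ep_reduct L Phi)" unfolding erL using branch[OF roL I] by blast
      qed
      then have "realizable L Phi" unfolding realizable_def using comp EL by metis
      then show False using nr by blast
    next
      assume h: "(Y,Y) \<in> SE (ep_reduct L Phi) \<and> \<not>(X \<noteq> Y \<and> (X,Y) \<in> SE (ep_reduct L Phi))
       \<and> \<not>((Y,Y) \<in> SE (ep_reduct W Phi) \<and> \<not>(X \<noteq> Y \<and> (X,Y) \<in> SE (ep_reduct W Phi)))"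
      then have "insert g0 Y \<in> AS (AR, QL Phi \<union> S)" unfolding test[OF roL] erL by blast
      then have "insert g0 Y \<in> M1" using M1L by simp
      then show False using testW h by blast
    qed
  qed
  have "M1 \<notin> CWV (elp_union L Rp)" unfolding CWV_def using notL by blast
  moreover have "M1 \<notin> WV (elp_union L Rp)" unfolding WV_def using notL by blast
  ultimately show ?thesis using WV1 CWV1 by blast
qed

end

lemma generic_ex:
  fixes W L :: "'a elp"
  assumes inf: "infinite (UNIV :: 'a set)" and wfW: "wf_elp W" and wfL: "wf_elp L"
    and AL: "elp_atoms L = elp_atoms W" and EL: "elp_eps L = elp_eps W" and PhiE: "Phi \<subseteq> elp_eps W"
    and IIm: "II \<subseteq> Mods (ep_reduct W Phi)" and comp: "compatible II Phi (elp_eps W)"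
    and XY: "X \<subseteq> Y" and YA: "Y \<subseteq> elp_atoms W"
    and HW: "(Y,Y) \<in> SE (ep_reduct W Phi) \<Longrightarrow> \<not>(X \<noteq> Y \<and> (X,Y) \<in> SE (ep_reduct W Phi))
       \<Longrightarrow> \<forall>l\<in>elp_eps W - Phi. sat Y l"
    and HL: "\<not> realizable L Phi \<or> ((Y,Y) \<in> SE (ep_reduct L Phi) \<and> \<not>(X \<noteq> Y \<and> (X,Y) \<in> SE (ep_reduct L Phi))
       \<and> \<not>((Y,Y) \<in> SE (ep_reduct W Phi) \<and> \<not>(X \<noteq> Y \<and> (X,Y) \<in> SE (ep_reduct W Phi))))"
  shows "\<exists>R. plain_elp R \<and> CWV (elp_union W R) \<noteq> CWV (elp_union L R) \<and> WV (elp_union W R) \<noteq> WV (elp_union L R)"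
proof -
  define A where "A = elp_atoms W"
  have finA: "finite A" unfolding A_def using wf_elpD(1)[OF wfW] .
  have IIA: "\<forall>I\<in>II. I \<subseteq> A" using IIm unfolding Mods_def ep_reduct_def A_def by auto
  have finII: "finite II" using finA IIA by (meson Pow_iff finite_Pow_iff finite_subset subsetI)
  have "infinite (UNIV - A)" by (rule Diff_infinite_finite[OF finA inf])
  then obtain f :: "nat \<Rightarrow> 'a" where f: "inj f" "range f \<subseteq> UNIV - A"
    using infinite_countable_subset by blast
  obtain h :: "'a set \<Rightarrow> nat" where h: "inj_on h II"
    using finite_imp_inj_to_nat_seg[OF finII] by blast
  define g where "g I = f (Suc (h I))" for I
  define g0 where "g0 = f 0"
  have c: "constr A II g g0 X Y"
  proof
    show "finite A" by (rule finA)
    show "\<forall>I\<in>II. I \<subseteq> A" by (rule IIA)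
    show "inj_on g II" unfolding g_def inj_on_def using f(1) h unfolding inj_def inj_on_def by blast
    show "\<forall>I\<in>II. g I \<notin> A" unfolding g_def using f(2) by blast
    show "g0 \<notin> A" unfolding g0_def using f(2) by blast
    show "\<forall>I\<in>II. g I \<noteq> g0" unfolding g_def g0_def using f(1) unfolding inj_def by blast
    show "X \<subseteq> Y" by (rule XY)
    show "Y \<subseteq> A" using YA unfolding A_def .
  qed
  show ?thesis
    using constr.generic[OF c wfW wfL A_def[symmetric] AL[folded A_def] EL PhiE IIm comp HW HL]
      constr.plain_Rp[OF c] by blast
qed

lemma flip:
  "\<exists>R. plain_elp R \<and> CWV (elp_union P2 R) \<noteq> CWV (elp_union P1 R) \<and> WV (elp_union P2 R) \<noteq> WV (elp_union P1 R)
   \<Longrightarrow> \<exists>R. plain_elp R \<and> CWV (elp_union P1 R) \<noteq> CWV (elp_union P2 R) \<and> WV (elp_union P1 R) \<noteq> WV (elp_union P2 R)"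
  by metis

lemma SE_fst: "(X, Y) \<in> SE (ep_reduct P Phi) \<Longrightarrow> X \<subseteq> Y \<and> Y \<subseteq> elp_atoms P"
  unfolding SE_alt ep_reduct_eq by simp

lemma SE_top: "(X, Y) \<in> SE (ep_reduct P Phi) \<Longrightarrow> (Y, Y) \<in> SE (ep_reduct P Phi)"
  unfolding SE_alt using modr_glr_self by blast

lemma pair_case:
  fixes P1 P2 :: "'a elp"
  assumes inf: "infinite (UNIV :: 'a set)" and wf1: "wf_elp P1" and wf2: "wf_elp P2"
    and AA: "elp_atoms P1 = elp_atoms P2" and EE: "elp_eps P1 = elp_eps P2"
    and PhiE: "Phi \<subseteq> elp_eps P1" and r1: "realizable P1 Phi" and r2: "realizable P2 Phi"
    and in1: "(X, Y) \<in> SE (ep_reduct P1 Phi)" and nin2: "(X, Y) \<notin> SE (ep_reduct P2 Phi)"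
  shows "\<exists>R. plain_elp R \<and> CWV (elp_union P1 R) \<noteq> CWV (elp_union P2 R) \<and> WV (elp_union P1 R) \<noteq> WV (elp_union P2 R)"
proof (cases "(Y, Y) \<in> SE (ep_reduct P2 Phi)")
  case False
  from r2 obtain II where IIm: "II \<subseteq> Mods (ep_reduct P2 Phi)" and comp: "compatible II Phi (elp_eps P2)"
    unfolding realizable_def by blast
  have YA: "Y \<subseteq> elp_atoms P2" using SE_fst[OF in1] AA by simp
  have YY1: "(Y, Y) \<in> SE (ep_reduct P1 Phi)" using SE_top[OF in1] .
  have "\<exists>R. plain_elp R \<and> CWV (elp_union P2 R) \<noteq> CWV (elp_union P1 R) \<and> WV (elp_union P2 R) \<noteq> WV (elp_union P1 R)"
    by (rule generic_ex[OF inf wf2 wf1 AA EE PhiE[unfolded EE] IIm comp subset_refl YA])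
      (use False YY1 in auto)
  then show ?thesis by (rule flip)
next
  case True
  from r1 obtain II where IIm: "II \<subseteq> Mods (ep_reduct P1 Phi)" and comp: "compatible II Phi (elp_eps P1)"
    unfolding realizable_def by blast
  have XY: "X \<subseteq> Y" and YA: "Y \<subseteq> elp_atoms P1" using SE_fst[OF in1] by auto
  have XnY: "X \<noteq> Y" using True nin2 by blast
  show ?thesis
    by (rule generic_ex[OF inf wf1 wf2 AA[symmetric] EE[symmetric] PhiE IIm comp XY YA])
      (use True XnY in1 nin2 in auto)
qed

lemma one_realizable:
  fixes P1 P2 :: "'a elp"
  assumes inf: "infinite (UNIV :: 'a set)" and wf1: "wf_elp P1" and wf2: "wf_elp P2"
    and AA: "elp_atoms P1 = elp_atoms P2" and EE: "elp_eps P1 = elp_eps P2"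
    and PhiE: "Phi \<subseteq> elp_eps P1" and r1: "realizable P1 Phi" and nr2: "\<not> realizable P2 Phi"
  shows "\<exists>R. plain_elp R \<and> CWV (elp_union P1 R) \<noteq> CWV (elp_union P2 R) \<and> WV (elp_union P1 R) \<noteq> WV (elp_union P2 R)"
proof -
  from r1 obtain II where IIm: "II \<subseteq> Mods (ep_reduct P1 Phi)" and comp: "compatible II Phi (elp_eps P1)"
    unfolding realizable_def by blast
  then obtain I0 where I0: "I0 \<in> II" unfolding compatible_def by blast
  have I0A: "I0 \<subseteq> elp_atoms P1" using IIm I0 unfolding Mods_def ep_reduct_eq by auto
  have sat0: "\<forall>l\<in>elp_eps P1 - Phi. sat I0 l" using comp I0 unfolding compatible_def by blast
  show ?thesis
    by (rule generic_ex[OF inf wf1 wf2 AA[symmetric] EE[symmetric] PhiE IIm comp subset_refl I0A])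
      (use sat0 nr2 in auto)
qed

lemma diff_exists:
  fixes P1 P2 :: "'a elp"
  assumes inf: "infinite (UNIV :: 'a set)" and wf1: "wf_elp P1" and wf2: "wf_elp P2"
    and AA: "elp_atoms P1 = elp_atoms P2" and EE: "elp_eps P1 = elp_eps P2"
    and ne: "SE_fun P1 Phi \<noteq> SE_fun P2 Phi"
  shows "\<exists>R. plain_elp R \<and> CWV (elp_union P1 R) \<noteq> CWV (elp_union P2 R) \<and> WV (elp_union P1 R) \<noteq> WV (elp_union P2 R)"
proof -
  have PhiE: "Phi \<subseteq> elp_eps P1"
  proof (rule ccontr)
    assume "\<not> Phi \<subseteq> elp_eps P1"
    then have "SE_fun P1 Phi = {}" "SE_fun P2 Phi = {}" unfolding SE_fun_def using EE by simp_all
    then show False using ne by simp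
  qed
  show ?thesis
  proof (cases "realizable P1 Phi"; cases "realizable P2 Phi")
    assume r1: "realizable P1 Phi" and r2: "realizable P2 Phi"
    have "SE (ep_reduct P1 Phi) \<noteq> SE (ep_reduct P2 Phi)"
      using ne r1 r2 PhiE EE unfolding SE_fun_def by simp
    then obtain p where p: "(p \<in> SE (ep_reduct P1 Phi) \<and> p \<notin> SE (ep_reduct P2 Phi))
        \<or> (p \<in> SE (ep_reduct P2 Phi) \<and> p \<notin> SE (ep_reduct P1 Phi))" by blast
    obtain X Y where "p = (X, Y)" by (cases p)
    with p have "((X, Y) \<in> SE (ep_reduct P1 Phi) \<and> (X, Y) \<notin> SE (ep_reduct P2 Phi))
        \<or> ((X, Y) \<in> SE (ep_reduct P2 Phi) \<and> (X, Y) \<notin> SE (ep_reduct P1 Phi))" by simp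
    then show ?thesis
    proof
      assume h: "(X, Y) \<in> SE (ep_reduct P1 Phi) \<and> (X, Y) \<notin> SE (ep_reduct P2 Phi)"
      show ?thesis using pair_case[OF inf wf1 wf2 AA EE PhiE r1 r2 h[THEN conjunct1] h[THEN conjunct2]] .
    next
      assume h: "(X, Y) \<in> SE (ep_reduct P2 Phi) \<and> (X, Y) \<notin> SE (ep_reduct P1 Phi)"
      show ?thesis
        using pair_case[OF inf wf2 wf1 AA[symmetric] EE[symmetric] PhiE[unfolded EE] r2 r1 h[THEN conjunct1] h[THEN conjunct2]]
        by (rule flip)
    qed
  next
    assume r1: "realizable P1 Phi" and nr2: "\<not> realizable P2 Phi"
    show ?thesis using one_realizable[OF inf wf1 wf2 AA EE PhiE r1 nr2] .
  next
    assume nr1: "\<not> realizable P1 Phi" and r2: "realizable P2 Phi"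
    show ?thesis
      using one_realizable[OF inf wf2 wf1 AA[symmetric] EE[symmetric] PhiE[unfolded EE] r2 nr1]
      by (rule flip)
  next
    assume nr1: "\<not> realizable P1 Phi" and nr2: "\<not> realizable P2 Phi"
    then have "SE_fun P1 Phi = {}" "SE_fun P2 Phi = {}" unfolding SE_fun_def by simp_all
    then show ?thesis using ne by simp
  qed
qed

theorem theorem2:
  fixes P1 P2 :: "'a elp"
  assumes "infinite (UNIV :: 'a set)"
    and "wf_elp P1" and "wf_elp P2"
    and "elp_atoms P1 = elp_atoms P2" and "elp_eps P1 = elp_eps P2"
  shows "(strongly_elp_cwv_eq P1 P2 \<longleftrightarrow> strongly_asp_cwv_eq P1 P2)
       \<and> (strongly_asp_cwv_eq P1 P2 \<longleftrightarrow> strongly_elp_wv_eq P1 P2)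
       \<and> (strongly_elp_wv_eq P1 P2 \<longleftrightarrow> strongly_asp_wv_eq P1 P2)
       \<and> (strongly_asp_wv_eq P1 P2 \<longleftrightarrow> SE_fun P1 = SE_fun P2)"
proof -
  have i12: "strongly_elp_cwv_eq P1 P2 \<Longrightarrow> strongly_asp_cwv_eq P1 P2"
    unfolding strongly_elp_cwv_eq_def strongly_asp_cwv_eq_def plain_elp_def by blast
  have i34: "strongly_elp_wv_eq P1 P2 \<Longrightarrow> strongly_asp_wv_eq P1 P2"
    unfolding strongly_elp_wv_eq_def strongly_asp_wv_eq_def plain_elp_def by blast
  have i51: "SE_fun P1 = SE_fun P2 \<Longrightarrow> strongly_elp_cwv_eq P1 P2"
    unfolding strongly_elp_cwv_eq_def using CWV_WV_eq(1)[OF assms(2-5)] by blast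
  have i53: "SE_fun P1 = SE_fun P2 \<Longrightarrow> strongly_elp_wv_eq P1 P2"
    unfolding strongly_elp_wv_eq_def using CWV_WV_eq(2)[OF assms(2-5)] by blast
  have i25: "SE_fun P1 = SE_fun P2" if s: "strongly_asp_cwv_eq P1 P2"
  proof (rule ccontr)
    assume "SE_fun P1 \<noteq> SE_fun P2"
    then obtain Phi where "SE_fun P1 Phi \<noteq> SE_fun P2 Phi" by blast
    from diff_exists[OF assms this] obtain R where "plain_elp R" "CWV (elp_union P1 R) \<noteq> CWV (elp_union P2 R)"
      by blast
    then show False using s unfolding strongly_asp_cwv_eq_def by blast
  qed
  have i45: "SE_fun P1 = SE_fun P2" if s: "strongly_asp_wv_eq P1 P2"
  proof (rule ccontr)
    assume "SE_fun P1 \<noteq> SE_fun P2"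
    then obtain Phi where "SE_fun P1 Phi \<noteq> SE_fun P2 Phi" by blast
    from diff_exists[OF assms this] obtain R where "plain_elp R" "WV (elp_union P1 R) \<noteq> WV (elp_union P2 R)"
      by blast
    then show False using s unfolding strongly_asp_wv_eq_def by blast
  qed
  show ?thesis using i12 i34 i51 i53 i25 i45 by blast
qed

end
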